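(* Let $\Sigma$ be a set, let $1\le p<\infty$, suppose $d$ is a separating quasi-metric on $\Sigma$, $\alpha,\beta:\Sigma^+\to\mathbb{R}$ with $\alpha^p,\beta^p\in\Gamma(\Sigma)$, and let $D$ be the $\ell^p$ edit distance on $\Sigma^*$ extending $d$, $\alpha$ and $\beta$. Assume in addition that for all $a,b\in\Sigma$ and $u,v,x\in\Sigma^*$: (W1) $d^p(a,b)+\beta^p(ubv)\ge\beta^p(uav)$; (W2) $d^p(a,b)+\alpha^p(uav)\ge\alpha^p(ubv)$; (W3) $\beta^p(uv)+\beta^p(x)\ge\beta^p(uxv)$; (W4) $\alpha^p(uv)+\alpha^p(x)\ge\alpha^p(uxv)$; (W5) $\beta^p(uxv)+\alpha^p(x)\ge\beta^p(uv)$; (W6) $\alpha^p(uxv)+\beta^p(x)\ge\alpha^p(uv)$; (W7) $\alpha^p(ux)+\beta^p(xv)\ge\alpha^p(u)+\beta^p(v)$; (W8) $\beta^p(ux)+\alpha^p(xv)\ge\beta^p(u)+\alpha^p(v)$, where $\alpha(e)=\beta(e)=0$ by convention. Then $D$ is a separating quasi-metric on $\Sigma^*$.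
   Context: $\Sigma^*$ is the free monoid on $\Sigma$ (finite words, concatenation, empty word $e$), $\Sigma^+=\Sigma^*\setminus\{e\}$; for $w=w_1\cdots w_n$, $|w|=n$, $\bar w_k=w_1\cdots w_k$, $\bar w_0=e$. A quasi-metric on $X$ is a map $q:X\times X\to\mathbb{R}_{\ge0}$ with $q(x,y)=q(y,x)=0\iff x=y$ and $q(x,z)\le q(x,y)+q(y,z)$; it is separating if $q(x,y)=0$ implies $x=y$. A gap penalty over $\Sigma^+$ is a positive function $\gamma:\Sigma^+\to\mathbb{R}$ with $\gamma(u)+\gamma(v)\ge\gamma(uv)$ for all $u,v\in\Sigma^+$; $\Gamma(\Sigma)$ is the set of these. $\ell^p$ edit distance extending $d$, $\alpha$, $\beta$: for $x,y\in\Sigma^*$, $m=|x|$, $n=|y|$, $D(e,e)=0$, $D(e,\bar y_j)=\alpha(\bar y_j)$ ($1\le j\le n$), $D(\bar x_i,e)=\beta(\bar x_i)$ ($1\le i\le m$), and for $1\le i\le m$, $1\le j\le n$, \[D(\bar x_i,\bar y_j)=\Big(\min\Big\{D^p(\bar x_{i-1},\bar y_{j-1})+d^p(x_i,y_j),\ \min_{1\le k\le j}\{D^p(\bar x_i,\bar y_{j-k})+\alpha^p(y_{j-k+1}\cdots y_j)\},\ \min_{1\le k\le i}\{D^p(\bar x_{i-k},\bar y_j)+\beta^p(x_{i-k+1}\cdots x_i)\}\Big\}\Big)^{1/p},\] with $D(x,y)=D(\bar x_m,\bar y_n)$. *)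

theory Defs
  imports Main "HOL.Transcendental"
begin

definition quasi_metric :: "('a \<Rightarrow> 'a \<Rightarrow> real) \<Rightarrow> bool" where
  "quasi_metric q \<longleftrightarrow>
     (\<forall>x y. q x y \<ge> 0) \<and>
     (\<forall>x y. (q x y = 0 \<and> q y x = 0) \<longleftrightarrow> x = y) \<and>
     (\<forall>x y z. q x z \<le> q x y + q y z)"

definition separating :: "('a \<Rightarrow> 'a \<Rightarrow> real) \<Rightarrow> bool" where
  "separating q \<longleftrightarrow> (\<forall>x y. q x y = 0 \<longrightarrow> x = y)"

definition gap_penalty :: "('a list \<Rightarrow> real) \<Rightarrow> bool" where
  "gap_penalty \<gamma> \<longleftrightarrow>
     (\<forall>u. u \<noteq> [] \<longrightarrow> \<gamma> u > 0) \<and>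
     (\<forall>u v. u \<noteq> [] \<longrightarrow> v \<noteq> [] \<longrightarrow> \<gamma> u + \<gamma> v \<ge> \<gamma> (u @ v))"

definition ppow :: "('a list \<Rightarrow> real) \<Rightarrow> real \<Rightarrow> 'a list \<Rightarrow> real" where
  "ppow \<alpha> p w = (if w = [] then 0 else \<alpha> w powr p)"

function edit_dist ::
  "('a \<Rightarrow> 'a \<Rightarrow> real) \<Rightarrow> ('a list \<Rightarrow> real) \<Rightarrow> ('a list \<Rightarrow> real) \<Rightarrow> real
     \<Rightarrow> 'a list \<Rightarrow> 'a list \<Rightarrow> real" where
  "edit_dist d \<alpha> \<beta> p [] [] = 0"
| "edit_dist d \<alpha> \<beta> p [] (y # ys) = \<alpha> (y # ys)"
| "edit_dist d \<alpha> \<beta> p (x # xs) [] = \<beta> (x # xs)"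
| "edit_dist d \<alpha> \<beta> p (x # xs) (y # ys) =
     (Min (set (
        [edit_dist d \<alpha> \<beta> p (butlast (x # xs)) (butlast (y # ys)) powr p
           + d (last (x # xs)) (last (y # ys)) powr p]
      @ map (\<lambda>k. edit_dist d \<alpha> \<beta> p (x # xs) (take (length (y # ys) - k) (y # ys)) powr p
                 + \<alpha> (drop (length (y # ys) - k) (y # ys)) powr p) [1..<length (y # ys) + 1]
      @ map (\<lambda>k. edit_dist d \<alpha> \<beta> p (take (length (x # xs) - k) (x # xs)) (y # ys) powr p
                 + \<beta> (drop (length (x # xs) - k) (x # xs)) powr p) [1..<length (x # xs) + 1]
     ))) powr (1 / p)"
  by pat_completeness auto
termination
  by (relation "measure (\<lambda>(_, _, _, _, xs, ys). length xs + length ys)") auto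

end

theory Submission
  imports Defs "HOL-Analysis.Convex"
begin

lemma conv_ineq:
  fixes p l u v :: real
  assumes p: "1 \<le> p" and l: "0 < l" "l < 1" and u: "0 \<le> u" and v: "0 \<le> v"
  shows "(u + v) powr p \<le> l powr (1 - p) * u powr p + (1 - l) powr (1 - p) * v powr p"
proof -
  have ge1: "1 \<le> b powr (1 - p)" if "0 < b" "b \<le> 1" for b :: real
  proof -
    have "1 \<le> inverse b" using that by (simp add: one_le_inverse_iff)
    then have "1 \<le> (inverse b) powr (p - 1)" using p by (intro ge_one_powr_ge_zero) auto
    also have "(inverse b) powr (p - 1) = b powr (1 - p)"
      using that by (simp add: powr_def ln_inverse algebra_simps)
    finally show ?thesis .
  qed
  show ?thesis
  proof (cases "u = 0 \<or> v = 0")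
    case True
    then show ?thesis
    proof
      assume "u = 0"
      then show ?thesis using ge1[of "1 - l"] l v
        by (simp add: mult_le_cancel_right1)
    next
      assume "v = 0"
      then show ?thesis using ge1[of "l"] l u
        by (simp add: mult_le_cancel_right1)
    qed
  next
    case False
    then have u': "0 < u" and v': "0 < v" using u v by auto
    have "(\<lambda>x::real. x powr p) ((1 - (1 - l)) *\<^sub>R (u / l) + (1 - l) *\<^sub>R (v / (1 - l)))
          \<le> (1 - (1 - l)) * (u / l) powr p + (1 - l) * (v / (1 - l)) powr p"
      by (rule convex_onD[OF powr_convex[OF p]]) (use l u' v' in auto)
    moreover have "(1 - (1 - l)) *\<^sub>R (u / l) + (1 - l) *\<^sub>R (v / (1 - l)) = u + v"
      using l by simp
    moreover have "c * (w / c) powr p = c powr (1 - p) * w powr p" if "0 < c" "0 \<le> w" for c w :: real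
    proof -
      have "c * (w / c) powr p = c powr 1 * w powr p / c powr p"
        using that by (simp add: powr_divide)
      also have "\<dots> = c powr (1 - p) * w powr p"
        using that by (simp add: powr_diff)
      finally show ?thesis .
    qed
    ultimately show ?thesis using l u v by simp
  qed
qed

lemma powr_key:
  fixes a S p :: real
  assumes "0 < a" "0 < S"
  shows "(a / S) powr (1 - p) * a powr p = a * S powr (p - 1)"
proof -
  have 1: "a powr (1 - p) * a powr p = a" using assms by (simp add: powr_add[symmetric])
  have 2: "S powr (p - 1) * S powr (1 - p) = 1" using assms by (simp add: powr_add[symmetric])
  have "(a / S) powr (1 - p) * a powr p = a powr (1 - p) * a powr p / S powr (1 - p)"
    using assms by (simp add: powr_divide)
  also have "\<dots> = a / S powr (1 - p)" using 1 by simp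
  also have "\<dots> = a * S powr (p - 1)" using 2 assms by (simp add: field_simps)
  finally show ?thesis .
qed

lemma powr_key2:
  fixes S p :: real
  assumes "0 < S"
  shows "S * S powr (p - 1) = S powr p"
  using assms by (simp add: powr_add[symmetric] powr_mult_base)

locale ED =
  fixes d :: "'a \<Rightarrow> 'a \<Rightarrow> real"
    and \<alpha> \<beta> :: "'a list \<Rightarrow> real"
    and p :: real
  assumes p: "1 \<le> p"
    and qm: "quasi_metric d" and sep: "separating d"
    and \<alpha>_pos: "\<And>w. w \<noteq> [] \<Longrightarrow> \<alpha> w > 0"
    and \<beta>_pos: "\<And>w. w \<noteq> [] \<Longrightarrow> \<beta> w > 0"
    and g\<alpha>: "gap_penalty (ppow \<alpha> p)"
    and g\<beta>: "gap_penalty (ppow \<beta> p)"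
    and W1: "\<And>a b u v. d a b powr p + ppow \<beta> p (u @ [b] @ v) \<ge> ppow \<beta> p (u @ [a] @ v)"
    and W2: "\<And>a b u v. d a b powr p + ppow \<alpha> p (u @ [a] @ v) \<ge> ppow \<alpha> p (u @ [b] @ v)"
    and W3: "\<And>u v x. ppow \<beta> p (u @ v) + ppow \<beta> p x \<ge> ppow \<beta> p (u @ x @ v)"
    and W4: "\<And>u v x. ppow \<alpha> p (u @ v) + ppow \<alpha> p x \<ge> ppow \<alpha> p (u @ x @ v)"
    and W5: "\<And>u v x. ppow \<beta> p (u @ x @ v) + ppow \<alpha> p x \<ge> ppow \<beta> p (u @ v)"
    and W6: "\<And>u v x. ppow \<alpha> p (u @ x @ v) + ppow \<beta> p x \<ge> ppow \<alpha> p (u @ v)"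
    and W7: "\<And>u v x. ppow \<alpha> p (u @ x) + ppow \<beta> p (x @ v) \<ge> ppow \<alpha> p u + ppow \<beta> p v"
    and W8: "\<And>u v x. ppow \<beta> p (u @ x) + ppow \<alpha> p (x @ v) \<ge> ppow \<beta> p u + ppow \<alpha> p v"
begin

declare edit_dist.simps(4)[simp del]

abbreviation D where "D \<equiv> edit_dist d \<alpha> \<beta> p"

definition F where "F x y = D x y powr p"

lemma d_nonneg: "0 \<le> d a b" using qm by (auto simp: quasi_metric_def)
lemma d_refl: "d a a = 0" using qm unfolding quasi_metric_def by blast
lemma d_tri: "d a c \<le> d a b + d b c" using qm by (auto simp: quasi_metric_def)

lemma ppow_nonneg: "0 \<le> ppow f p w" by (simp add: ppow_def)

lemma ppow_pos\<alpha>: "w \<noteq> [] \<Longrightarrow> 0 < ppow \<alpha> p w"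
  using \<alpha>_pos[of w] by (simp add: ppow_def)
lemma ppow_pos\<beta>: "w \<noteq> [] \<Longrightarrow> 0 < ppow \<beta> p w"
  using \<beta>_pos[of w] by (simp add: ppow_def)

lemma D_nonneg: "0 \<le> D x y"
proof (cases x)
  case Nil
  then show ?thesis
    by (cases y) (auto intro: less_imp_le \<alpha>_pos)
next
  case (Cons a xs)
  then show ?thesis
    by (cases y) (auto intro: less_imp_le \<beta>_pos simp: edit_dist.simps(4)[of d \<alpha> \<beta> p a xs])
qed

lemma F_nonneg: "0 \<le> F x y" by (simp add: F_def)

lemma D_F: "D x y = F x y powr (1 / p)"
  using D_nonneg[of x y] p by (simp add: F_def powr_powr)

lemma F_Nil_Nil: "F [] [] = 0" by (simp add: F_def)
lemma F_Nil: "F [] y = ppow \<alpha> p y"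
  by (cases y) (auto simp: F_def ppow_def)
lemma F_Nil2: "F x [] = ppow \<beta> p x"
  by (cases x) (auto simp: F_def ppow_def)

lemma F_rec:
  assumes "x \<noteq> []" "y \<noteq> []"
  shows "F x y = Min (set ([F (butlast x) (butlast y) + d (last x) (last y) powr p]
      @ map (\<lambda>k. F x (take (length y - k) y) + \<alpha> (drop (length y - k) y) powr p) [1..<length y + 1]
      @ map (\<lambda>k. F (take (length x - k) x) y + \<beta> (drop (length x - k) x) powr p) [1..<length x + 1]))"
proof -
  obtain a xs where x: "x = a # xs" using assms by (cases x) auto
  obtain b ys where y: "y = b # ys" using assms by (cases y) auto
  define M where "M = Min (set ([F (butlast x) (butlast y) + d (last x) (last y) powr p]
      @ map (\<lambda>k. F x (take (length y - k) y) + \<alpha> (drop (length y - k) y) powr p) [1..<length y + 1]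
      @ map (\<lambda>k. F (take (length x - k) x) y + \<beta> (drop (length x - k) x) powr p) [1..<length x + 1]))"
  have "D x y = M powr (1 / p)"
    unfolding M_def F_def x y by (subst edit_dist.simps(4)) (rule refl)
  moreover have "0 \<le> M"
    unfolding M_def by (subst Min_ge_iff) (auto simp: F_def)
  ultimately have "F x y = M" using p by (simp add: F_def powr_powr)
  then show ?thesis by (simp only: M_def)
qed

lemma F_sub: "F (x @ [a]) (y @ [b]) \<le> F x y + d a b powr p"
  by (subst F_rec) auto

lemma F_ins_ne: assumes "w \<noteq> []" shows "F x (y @ w) \<le> F x y + \<alpha> w powr p"
proof (cases "x = []")
  case True
  then show ?thesis
  proof (cases "y = []")
    case True
    then show ?thesis using \<open>x = []\<close> assms by (simp add: F_Nil ppow_def)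
  next
    case False
    then show ?thesis using \<open>x = []\<close> assms g\<alpha>
      by (auto simp: F_Nil gap_penalty_def ppow_def)
  qed
next
  case False
  have "0 < length w" using assms by simp
  then have mem: "length w \<in> set [1..<length (y @ w) + 1]" by (simp only: set_upt) (auto simp: Suc_le_eq)
  show ?thesis
    apply (subst F_rec[OF False])
    using assms apply simp
    apply (rule Min_le)
     apply simp
    using mem apply (auto intro!: image_eqI[where x = "length w"])
    done
qed

lemma F_del_ne: assumes "w \<noteq> []" shows "F (x @ w) y \<le> F x y + \<beta> w powr p"
proof (cases "y = []")
  case True
  then show ?thesis
  proof (cases "x = []")
    case True
    then show ?thesis using \<open>y = []\<close> assms by (simp add: F_Nil2 ppow_def)
  next
    case False
    then show ?thesis using \<open>y = []\<close> assms g\<beta>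
      by (auto simp: F_Nil2 gap_penalty_def ppow_def)
  qed
next
  case False
  have "0 < length w" using assms by simp
  then have mem: "length w \<in> set [1..<length (x @ w) + 1]" by (simp only: set_upt) (auto simp: Suc_le_eq)
  show ?thesis
    apply (subst F_rec[OF _ False])
    using assms apply simp
    apply (rule Min_le)
     apply simp
    using mem apply (auto intro!: image_eqI[where x = "length w"])
    done
qed

lemma F_ins: "F x (y @ w) \<le> F x y + ppow \<alpha> p w"
  using F_ins_ne[of w x y] by (cases "w = []") (auto simp: ppow_def)

lemma F_del: "F (x @ w) y \<le> F x y + ppow \<beta> p w"
  using F_del_ne[of w x y] by (cases "w = []") (auto simp: ppow_def)

lemma F_cases:
  assumes "x \<noteq> []" "y \<noteq> []"
  obtains (sub) x' a y' b where "x = x' @ [a]" "y = y' @ [b]" "F x y = F x' y' + d a b powr p"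
  | (ins) y' w where "w \<noteq> []" "y = y' @ w" "F x y = F x y' + ppow \<alpha> p w"
  | (del) x' v where "v \<noteq> []" "x = x' @ v" "F x y = F x' y + ppow \<beta> p v"
proof -
  let ?L = "[F (butlast x) (butlast y) + d (last x) (last y) powr p]
      @ map (\<lambda>k. F x (take (length y - k) y) + \<alpha> (drop (length y - k) y) powr p) [1..<length y + 1]
      @ map (\<lambda>k. F (take (length x - k) x) y + \<beta> (drop (length x - k) x) powr p) [1..<length x + 1]"
  have FM: "F x y = Min (set ?L)" by (rule F_rec[OF assms])
  have "Min (set ?L) \<in> set ?L" by (rule Min_in) auto
  then have "F x y \<in> set ?L" using FM by simp
  then have "F x y = F (butlast x) (butlast y) + d (last x) (last y) powr p
    \<or> (\<exists>k. 1 \<le> k \<and> k \<le> length y \<and> F x y = F x (take (length y - k) y) + \<alpha> (drop (length y - k) y) powr p)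
    \<or> (\<exists>k. 1 \<le> k \<and> k \<le> length x \<and> F x y = F (take (length x - k) x) y + \<beta> (drop (length x - k) x) powr p)"
    by (simp only: set_append set_map set_upt set_simps) auto
  then consider (1) "F x y = F (butlast x) (butlast y) + d (last x) (last y) powr p"
    | (2) k where "k \<in> {1..length y}" "F x y = F x (take (length y - k) y) + \<alpha> (drop (length y - k) y) powr p"
    | (3) k where "k \<in> {1..length x}" "F x y = F (take (length x - k) x) y + \<beta> (drop (length x - k) x) powr p"
    by auto
  then show ?thesis
  proof cases
    case 1
    then show ?thesis using sub[of "butlast x" "last x" "butlast y" "last y"] assms by simp
  next
    case (2 k)
    have ne: "drop (length y - k) y \<noteq> []" using 2(1) by auto
    show ?thesis using ins[of "drop (length y - k) y" "take (length y - k) y"] ne 2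
      by (simp add: ppow_def)
  next
    case (3 k)
    have ne: "drop (length x - k) x \<noteq> []" using 3(1) by auto
    show ?thesis using del[of "drop (length x - k) x" "take (length x - k) x"] ne 3
      by (simp add: ppow_def)
  qed
qed

context
  fixes c1 c2 :: real
  assumes conv: "\<And>u v. 0 \<le> u \<Longrightarrow> 0 \<le> v \<Longrightarrow> (u + v) powr p \<le> c1 * u powr p + c2 * v powr p"
begin

lemma c1_ge: "1 \<le> c1" using conv[of 1 0] by simp
lemma c2_ge: "1 \<le> c2" using conv[of 0 1] by simp

lemma le_c1: "0 \<le> a \<Longrightarrow> a \<le> c1 * a"
  using c1_ge mult_right_mono[of 1 c1 a] by simp
lemma le_c2: "0 \<le> a \<Longrightarrow> a \<le> c2 * a"
  using c2_ge mult_right_mono[of 1 c2 a] by simp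

lemma CI_step:
  assumes IHI: "\<And>x y w z t. length x + length y + length w + length z < n \<Longrightarrow>
      F x (z @ t) \<le> c1 * F x y + ppow \<alpha> p (w @ t) + c2 * F (y @ w) z"
  and IHD: "\<And>x y r z s. length x + length y + length r + length z < n \<Longrightarrow>
      F (x @ s) z \<le> c1 * F x (y @ r) + ppow \<beta> p (r @ s) + c2 * F y z"
  and m: "length x + length y + length w + length z = n" and w: "w \<noteq> []"
  shows "F x (z @ t) \<le> c1 * F x y + ppow \<alpha> p (w @ t) + c2 * F (y @ w) z"
proof (cases "z = []")
  case True
  have lw: "0 < length w" using w by simp
  have 1: "F x t \<le> F x [] + ppow \<alpha> p t" using F_ins[of x "[]" t] by simp
  have 2: "F x [] \<le> c1 * F x y + ppow \<beta> p y"
    using IHD[of x "[]" y "[]" "[]"] m lw True by (simp add: F_Nil_Nil)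
  have 3: "ppow \<beta> p (y @ w) + ppow \<alpha> p (w @ t) \<ge> ppow \<beta> p y + ppow \<alpha> p t" by (rule W8)
  have 4: "F (y @ w) z = ppow \<beta> p (y @ w)" using True F_Nil2 by simp
  have 5: "ppow \<beta> p (y @ w) \<le> c2 * ppow \<beta> p (y @ w)" by (rule le_c2[OF ppow_nonneg])
  have 6: "F x (z @ t) = F x t" using True by simp
  show ?thesis using 1 2 3 5 unfolding 4 6 by linarith
next
  case False
  have yw: "y @ w \<noteq> []" using w by simp
  show ?thesis
  using yw False proof (cases rule: F_cases)
    case (sub Y' b z' c)
    define w' where "w' = butlast w"
    have wb: "w = w' @ [b]" and Y': "Y' = y @ w'"
    proof -
      have h: "y @ w = (y @ w') @ [last w]" using w unfolding w'_def by simp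
      have "Y' @ [b] = (y @ w') @ [last w]" using sub(1)[symmetric] h by (rule trans)
      then have "Y' = y @ w' \<and> b = last w" by (simp only: append1_eq_conv)
      then show "w = w' @ [b]" "Y' = y @ w'" using w unfolding w'_def by auto
    qed
    have 1: "F x (z' @ [c] @ t) \<le> c1 * F x y + ppow \<alpha> p (w' @ [c] @ t) + c2 * F (y @ w') z'"
      using IHI[of x y w' z' "[c] @ t"] m sub(2) wb by simp
    have 2: "d b c powr p + ppow \<alpha> p (w' @ [b] @ t) \<ge> ppow \<alpha> p (w' @ [c] @ t)" by (rule W2)
    have 3: "d b c powr p \<le> c2 * d b c powr p" by (rule le_c2) simp
    have e1: "F (y @ w) z = F (y @ w') z' + d b c powr p" using sub Y' by simp
    have e2: "z @ t = z' @ [c] @ t" using sub by simp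
    have e3: "w @ t = w' @ [b] @ t" using wb by simp
    show ?thesis using 1 2 3 unfolding e1 e2 e3 distrib_left by linarith
  next
    case (ins z' u)
    have 1: "F x (z' @ u @ t) \<le> c1 * F x y + ppow \<alpha> p (w @ u @ t) + c2 * F (y @ w) z'"
      using IHI[of x y w z' "u @ t"] m ins by (cases u) auto
    have 2: "ppow \<alpha> p (w @ t) + ppow \<alpha> p u \<ge> ppow \<alpha> p (w @ u @ t)" by (rule W4)
    have 3: "ppow \<alpha> p u \<le> c2 * ppow \<alpha> p u" by (rule le_c2[OF ppow_nonneg])
    have e1: "F (y @ w) z = F (y @ w) z' + ppow \<alpha> p u" using ins by simp
    have e2: "z @ t = z' @ u @ t" using ins by simp
    show ?thesis using 1 2 3 unfolding e1 e2 distrib_left by linarith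
  next
    case (del Y' v)
    have A: "?thesis" if A1: "w = us @ v" and A2: "Y' = y @ us" for us
    proof -
      have "0 < length v" using del by simp
      then have 1: "F x (z @ t) \<le> c1 * F x y + ppow \<alpha> p (us @ t) + c2 * F (y @ us) z"
        using IHI[of x y us z t] m A1 by (cases v) auto
      have 2: "ppow \<alpha> p (us @ v @ t) + ppow \<beta> p v \<ge> ppow \<alpha> p (us @ t)" by (rule W6)
      have 3: "ppow \<beta> p v \<le> c2 * ppow \<beta> p v" by (rule le_c2[OF ppow_nonneg])
      have e1: "F (y @ w) z = F (y @ us) z + ppow \<beta> p v" using del A1 A2 by simp
      have e3: "w @ t = us @ v @ t" using A1 by simp
      show ?thesis using 1 2 3 unfolding e1 e3 distrib_left by linarith
    qed
    obtain us where "(y = Y' @ us \<and> us @ w = v) \<or> (y @ us = Y' \<and> w = us @ v)"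
      using del(2) append_eq_append_conv2[of y w Y' v] by blast
    then show ?thesis
    proof
      assume H: "y @ us = Y' \<and> w = us @ v" show ?thesis by (rule A[of us]) (use H in auto)
    next
      assume B: "y = Y' @ us \<and> us @ w = v"
      show ?thesis
      proof (cases "us = []")
        case True show ?thesis by (rule A[of "[]"]) (use B True in auto)
      next
        case False
        have 0: "F x (z @ t) \<le> F x z + ppow \<alpha> p t" by (rule F_ins)
        have 1: "F x z \<le> c1 * F x (Y' @ us) + ppow \<beta> p us + c2 * F Y' z"
          using IHD[of x Y' us z "[]"] m B w by (cases w) auto
        have 2: "ppow \<beta> p (us @ w) + ppow \<alpha> p (w @ t) \<ge> ppow \<beta> p us + ppow \<alpha> p t" by (rule W8)
        have 3: "ppow \<beta> p (us @ w) \<le> c2 * ppow \<beta> p (us @ w)" by (rule le_c2[OF ppow_nonneg])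
        have e1: "F (y @ w) z = F Y' z + ppow \<beta> p (us @ w)" using del B by simp
        have e2: "F x (Y' @ us) = F x y" using B by simp
        show ?thesis using 0 1 2 3 unfolding e1 distrib_left e2[symmetric] by linarith
      qed
    qed
  qed
qed

lemma CD_step:
  assumes IHI: "\<And>x y w z t. length x + length y + length w + length z < n \<Longrightarrow>
      F x (z @ t) \<le> c1 * F x y + ppow \<alpha> p (w @ t) + c2 * F (y @ w) z"
  and IHD: "\<And>x y r z s. length x + length y + length r + length z < n \<Longrightarrow>
      F (x @ s) z \<le> c1 * F x (y @ r) + ppow \<beta> p (r @ s) + c2 * F y z"
  and m: "length x + length y + length r + length z = n" and r: "r \<noteq> []"
  shows "F (x @ s) z \<le> c1 * F x (y @ r) + ppow \<beta> p (r @ s) + c2 * F y z"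
proof (cases "x = []")
  case True
  have lr: "0 < length r" using r by simp
  have 1: "F s z \<le> F [] z + ppow \<beta> p s" using F_del[of "[]" s z] by simp
  have 2: "F [] z \<le> ppow \<alpha> p y + c2 * F y z"
    using IHI[of "[]" "[]" y z "[]"] m lr True by (simp add: F_Nil_Nil)
  have 3: "ppow \<alpha> p (y @ r) + ppow \<beta> p (r @ s) \<ge> ppow \<alpha> p y + ppow \<beta> p s" by (rule W7)
  have 4: "F x (y @ r) = ppow \<alpha> p (y @ r)" using True F_Nil by simp
  have 5: "ppow \<alpha> p (y @ r) \<le> c1 * ppow \<alpha> p (y @ r)" by (rule le_c1[OF ppow_nonneg])
  have 6: "F (x @ s) z = F s z" using True by simp
  show ?thesis using 1 2 3 5 unfolding 4 6 by linarith
next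
  case False
  have yr: "y @ r \<noteq> []" using r by simp
  show ?thesis
  using False yr proof (cases rule: F_cases)
    case (sub x' a Y' b)
    define r' where "r' = butlast r"
    have rb: "r = r' @ [b]" and Y': "Y' = y @ r'"
    proof -
      have h: "y @ r = (y @ r') @ [last r]" using r unfolding r'_def by simp
      have "Y' @ [b] = (y @ r') @ [last r]" using sub(2)[symmetric] h by (rule trans)
      then have "Y' = y @ r' \<and> b = last r" by (simp only: append1_eq_conv)
      then show "r = r' @ [b]" "Y' = y @ r'" using r unfolding r'_def by auto
    qed
    have 1: "F (x' @ [a] @ s) z \<le> c1 * F x' (y @ r') + ppow \<beta> p (r' @ [a] @ s) + c2 * F y z"
      using IHD[of x' y r' z "[a] @ s"] m sub(1) rb by simp
    have 2: "d a b powr p + ppow \<beta> p (r' @ [b] @ s) \<ge> ppow \<beta> p (r' @ [a] @ s)" by (rule W1)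
    have 3: "d a b powr p \<le> c1 * d a b powr p" by (rule le_c1) simp
    have e1: "F x (y @ r) = F x' (y @ r') + d a b powr p" using sub Y' by simp
    have e2: "x @ s = x' @ [a] @ s" using sub by simp
    have e3: "r @ s = r' @ [b] @ s" using rb by simp
    show ?thesis using 1 2 3 unfolding e1 e2 e3 distrib_left by linarith
  next
    case (del x' v)
    have 1: "F (x' @ v @ s) z \<le> c1 * F x' (y @ r) + ppow \<beta> p (r @ v @ s) + c2 * F y z"
      using IHD[of x' y r z "v @ s"] m del by (cases v) auto
    have 2: "ppow \<beta> p (r @ s) + ppow \<beta> p v \<ge> ppow \<beta> p (r @ v @ s)" by (rule W3)
    have 3: "ppow \<beta> p v \<le> c1 * ppow \<beta> p v" by (rule le_c1[OF ppow_nonneg])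
    have e1: "F x (y @ r) = F x' (y @ r) + ppow \<beta> p v" using del by simp
    have e2: "x @ s = x' @ v @ s" using del by simp
    show ?thesis using 1 2 3 unfolding e1 e2 distrib_left by linarith
  next
    case (ins Y' u)
    have A: "?thesis" if A1: "r = us @ u" and A2: "Y' = y @ us" for us
    proof -
      have "0 < length u" using ins by simp
      then have 1: "F (x @ s) z \<le> c1 * F x (y @ us) + ppow \<beta> p (us @ s) + c2 * F y z"
        using IHD[of x y us z s] m A1 by (cases u) auto
      have 2: "ppow \<beta> p (us @ u @ s) + ppow \<alpha> p u \<ge> ppow \<beta> p (us @ s)" by (rule W5)
      have 3: "ppow \<alpha> p u \<le> c1 * ppow \<alpha> p u" by (rule le_c1[OF ppow_nonneg])
      have e1: "F x (y @ r) = F x (y @ us) + ppow \<alpha> p u" using ins A1 A2 by simp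
      have e3: "r @ s = us @ u @ s" using A1 by simp
      show ?thesis using 1 2 3 unfolding e1 e3 distrib_left by linarith
    qed
    obtain us where "(y = Y' @ us \<and> us @ r = u) \<or> (y @ us = Y' \<and> r = us @ u)"
      using ins(2) append_eq_append_conv2[of y r Y' u] by blast
    then show ?thesis
    proof
      assume H: "y @ us = Y' \<and> r = us @ u" show ?thesis by (rule A[of us]) (use H in auto)
    next
      assume B: "y = Y' @ us \<and> us @ r = u"
      show ?thesis
      proof (cases "us = []")
        case True show ?thesis by (rule A[of "[]"]) (use B True in auto)
      next
        case False
        have 0: "F (x @ s) z \<le> F x z + ppow \<beta> p s" by (rule F_del)
        have 1: "F x z \<le> c1 * F x Y' + ppow \<alpha> p us + c2 * F (Y' @ us) z"
          using IHI[of x Y' us z "[]"] m B r by (cases r) auto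
        have 2: "ppow \<alpha> p (us @ r) + ppow \<beta> p (r @ s) \<ge> ppow \<alpha> p us + ppow \<beta> p s" by (rule W7)
        have 3: "ppow \<alpha> p (us @ r) \<le> c1 * ppow \<alpha> p (us @ r)" by (rule le_c1[OF ppow_nonneg])
        have e1: "F x (y @ r) = F x Y' + ppow \<alpha> p (us @ r)" using ins B by simp
        have e2: "F (Y' @ us) z = F y z" using B by simp
        show ?thesis using 0 1 2 3 unfolding e1 distrib_left e2 by linarith
      qed
    qed
  qed
qed

lemma GM0_step:
  assumes IHG: "\<And>x y z. length x + length y + length z < n \<Longrightarrow> F x z \<le> c1 * F x y + c2 * F y z"
  and CIn: "\<And>x y w z t. length x + length y + length w + length z = n \<Longrightarrow> w \<noteq> [] \<Longrightarrow>
      F x (z @ t) \<le> c1 * F x y + ppow \<alpha> p (w @ t) + c2 * F (y @ w) z"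
  and CDn: "\<And>x y r z s. length x + length y + length r + length z = n \<Longrightarrow> r \<noteq> [] \<Longrightarrow>
      F (x @ s) z \<le> c1 * F x (y @ r) + ppow \<beta> p (r @ s) + c2 * F y z"
  and m: "length x + length y + length z = n"
  shows "F x z \<le> c1 * F x y + c2 * F y z"
proof (cases "y = []")
  case True
  have 1: "F x z \<le> F x [] + ppow \<alpha> p z" using F_ins[of x "[]" z] by simp
  have 2: "F x [] \<le> c1 * F x []" by (rule le_c1[OF F_nonneg])
  have 3: "ppow \<alpha> p z \<le> c2 * ppow \<alpha> p z" by (rule le_c2[OF ppow_nonneg])
  show ?thesis using 1 2 3 unfolding True F_Nil by linarith
next
  case False note ny = this
  show ?thesis
  proof (cases "x = []")
    case True
    have 1: "F [] z \<le> c1 * F [] [] + ppow \<alpha> p y + c2 * F y z"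
      using CIn[of "[]" "[]" y z "[]"] m ny True by simp
    have h1: "F [] z \<le> ppow \<alpha> p y + c2 * F y z" using 1 by (simp add: F_Nil_Nil)
    have 2: "ppow \<alpha> p y \<le> c1 * ppow \<alpha> p y" by (rule le_c1[OF ppow_nonneg])
    have 3: "F [] y = ppow \<alpha> p y" by (rule F_Nil)
    show ?thesis using h1 2 unfolding True 3 by linarith
  next
    case False note nx = this
    show ?thesis
    proof (cases "z = []")
      case True
      have 1: "F x [] \<le> c1 * F x y + ppow \<beta> p y + c2 * F [] []"
        using CDn[of x "[]" y "[]" "[]"] m ny True by simp
      have h1: "F x [] \<le> c1 * F x y + ppow \<beta> p y" using 1 by (simp add: F_Nil_Nil)
      have 2: "ppow \<beta> p y \<le> c2 * ppow \<beta> p y" by (rule le_c2[OF ppow_nonneg])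
      have 3: "F y [] = ppow \<beta> p y" by (rule F_Nil2)
      show ?thesis using h1 2 unfolding True 3 by linarith
    next
      case False note nz = this
      show ?thesis
      using nx ny proof (cases rule: F_cases)
        case (sub x' a y' b)
        show ?thesis
        using ny nz proof (cases rule: F_cases)
          case (sub y2 b2 z' c)
          have yy: "y2 = y' \<and> b2 = b" using sub(1) \<open>y = y' @ [b]\<close> by simp
          have 1: "F x' z' \<le> c1 * F x' y' + c2 * F y' z'" using IHG[of x' y' z'] m sub(2) \<open>x = x' @ [a]\<close> \<open>y = y' @ [b]\<close> by simp
          have 2: "F x z \<le> F x' z' + d a c powr p" using F_sub[of x' a z' c] sub(2) \<open>x = x' @ [a]\<close> by simp
          have 3: "d a c powr p \<le> (d a b + d b c) powr p"
            using p d_tri[of a c b] d_nonneg[of a c] by (intro powr_mono2) auto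
          have 4: "(d a b + d b c) powr p \<le> c1 * d a b powr p + c2 * d b c powr p"
            by (rule conv) (simp_all add: d_nonneg)
          have e: "F y z = F y' z' + d b c powr p" using sub(3) yy by simp
          show ?thesis using 1 2 3 4 unfolding e \<open>F x y = F x' y' + d a b powr p\<close> distrib_left by linarith
        next
          case (ins z' u)
          have 1: "F x z' \<le> c1 * F x y + c2 * F y z'" using IHG[of x y z'] m ins by (cases u) auto
          have 2: "F x z \<le> F x z' + ppow \<alpha> p u" using F_ins[of x z' u] ins by simp
          have 3: "ppow \<alpha> p u \<le> c2 * ppow \<alpha> p u" by (rule le_c2[OF ppow_nonneg])
          show ?thesis using 1 2 3 unfolding ins(3) distrib_left by linarith
        next
          case (del y2 r)
          have 1: "F x z \<le> c1 * F x (y2 @ r) + ppow \<beta> p r + c2 * F y2 z"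
            using CDn[of x y2 r z "[]"] m del by simp
          have 3: "ppow \<beta> p r \<le> c2 * ppow \<beta> p r" by (rule le_c2[OF ppow_nonneg])
          have e: "F x (y2 @ r) = F x y" using del by simp
          show ?thesis using 1 3 unfolding del(3) distrib_left e by linarith
        qed
      next
        case (ins y' w)
        have 1: "F x z \<le> c1 * F x y' + ppow \<alpha> p w + c2 * F (y' @ w) z"
          using CIn[of x y' w z "[]"] m ins by simp
        have 3: "ppow \<alpha> p w \<le> c1 * ppow \<alpha> p w" by (rule le_c1[OF ppow_nonneg])
        have e: "F (y' @ w) z = F y z" using ins by simp
        show ?thesis using 1 3 unfolding ins(3) distrib_left e by linarith
      next
        case (del x' v)
        have 1: "F x' z \<le> c1 * F x' y + c2 * F y z" using IHG[of x' y z] m del by (cases v) auto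
        have 2: "F x z \<le> F x' z + ppow \<beta> p v" using F_del[of x' v z] del by simp
        have 3: "ppow \<beta> p v \<le> c1 * ppow \<beta> p v" by (rule le_c1[OF ppow_nonneg])
        show ?thesis using 1 2 3 unfolding del(3) distrib_left by linarith
      qed
    qed
  qed
qed

lemma all_ineqs:
  "(\<forall>x y z. length x + length y + length z = n \<longrightarrow> F x z \<le> c1 * F x y + c2 * F y z)
   \<and> (\<forall>x y w z t. length x + length y + length w + length z = n \<longrightarrow>
        F x (z @ t) \<le> c1 * F x y + ppow \<alpha> p (w @ t) + c2 * F (y @ w) z)
   \<and> (\<forall>x y r z s. length x + length y + length r + length z = n \<longrightarrow>
        F (x @ s) z \<le> c1 * F x (y @ r) + ppow \<beta> p (r @ s) + c2 * F y z)"
proof (induction n rule: less_induct)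
  case (less n)
  have IHG: "F x z \<le> c1 * F x y + c2 * F y z" if "length x + length y + length z < n" for x y z
    using less.IH[OF that] by blast
  have IHI: "F x (z @ t) \<le> c1 * F x y + ppow \<alpha> p (w @ t) + c2 * F (y @ w) z"
    if "length x + length y + length w + length z < n" for x y w z t
    using less.IH[OF that] by blast
  have IHD: "F (x @ s) z \<le> c1 * F x (y @ r) + ppow \<beta> p (r @ s) + c2 * F y z"
    if "length x + length y + length r + length z < n" for x y r z s
    using less.IH[OF that] by blast
  have CIn: "F x (z @ t) \<le> c1 * F x y + ppow \<alpha> p (w @ t) + c2 * F (y @ w) z"
    if "length x + length y + length w + length z = n" "w \<noteq> []" for x y w z t
    by (rule CI_step[OF IHI IHD that])
  have CDn: "F (x @ s) z \<le> c1 * F x (y @ r) + ppow \<beta> p (r @ s) + c2 * F y z"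
    if "length x + length y + length r + length z = n" "r \<noteq> []" for x y r z s
    by (rule CD_step[OF IHI IHD that])
  have G: "F x z \<le> c1 * F x y + c2 * F y z" if "length x + length y + length z = n" for x y z
    by (rule GM0_step[OF IHG CIn CDn that])
  have CI: "F x (z @ t) \<le> c1 * F x y + ppow \<alpha> p (w @ t) + c2 * F (y @ w) z"
    if "length x + length y + length w + length z = n" for x y w z t
  proof (cases "w = []")
    case True
    have 1: "F x (z @ t) \<le> F x z + ppow \<alpha> p t" by (rule F_ins)
    have 2: "F x z \<le> c1 * F x y + c2 * F y z" using G that True by simp
    show ?thesis using 1 2 unfolding True append_Nil append_Nil2 by linarith
  next
    case False then show ?thesis using CIn that by blast
  qed
  have CD: "F (x @ s) z \<le> c1 * F x (y @ r) + ppow \<beta> p (r @ s) + c2 * F y z"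
    if "length x + length y + length r + length z = n" for x y r z s
  proof (cases "r = []")
    case True
    have 1: "F (x @ s) z \<le> F x z + ppow \<beta> p s" by (rule F_del)
    have 2: "F x z \<le> c1 * F x y + c2 * F y z" using G that True by simp
    show ?thesis using 1 2 unfolding True append_Nil append_Nil2 by linarith
  next
    case False then show ?thesis using CDn that by blast
  qed
  show ?case using G CI CD by blast
qed

lemma F_lin: "F x z \<le> c1 * F x y + c2 * F y z"
  using all_ineqs[of "length x + length y + length z"] by blast

end

lemma F_zero_eq: "F x y = 0 \<Longrightarrow> x = y"
proof (induction "length x + length y" arbitrary: x y rule: less_induct)
  case less
  show ?case
  proof (cases "x = []")
    case True
    then have "ppow \<alpha> p y = 0" using less.prems F_Nil by simp
    then show ?thesis using ppow_pos\<alpha>[of y] True by (cases "y = []") auto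
  next
    case False note nx = this
    show ?thesis
    proof (cases "y = []")
      case True
      then have "ppow \<beta> p x = 0" using less.prems F_Nil2 by simp
      then show ?thesis using ppow_pos\<beta>[of x] nx by auto
    next
      case False note ny = this
      show ?thesis
      using nx ny proof (cases rule: F_cases)
        case (sub x' a y' b)
        have "F x' y' + d a b powr p = 0" using sub less.prems by simp
        then have h1: "F x' y' = 0" and h2: "d a b powr p = 0"
          using F_nonneg[of x' y'] powr_ge_zero[of "d a b" p] by linarith+
        have "x' = y'" using less.hyps[OF _ h1] sub by simp
        moreover have "a = b" using h2 sep by (simp add: separating_def)
        ultimately show ?thesis using sub by simp
      next
        case (ins y' w)
        then show ?thesis using less.prems F_nonneg[of x y'] ppow_pos\<alpha>[of w] by simp
      next
        case (del x' v)
        then show ?thesis using less.prems F_nonneg[of x' y] ppow_pos\<beta>[of v] by simp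
      qed
    qed
  qed
qed

lemma F_refl: "F x x = 0"
proof (induction x rule: rev_induct)
  case Nil then show ?case by (rule F_Nil_Nil)
next
  case (snoc a xs)
  have "F (xs @ [a]) (xs @ [a]) \<le> F xs xs + d a a powr p" by (rule F_sub)
  then show ?case using snoc F_nonneg[of "xs @ [a]" "xs @ [a]"] p by (simp add: d_refl)
qed

lemma D_zero_iff: "D x y = 0 \<longleftrightarrow> x = y"
proof
  assume "D x y = 0"
  then have "F x y = 0" by (simp add: F_def)
  then show "x = y" by (rule F_zero_eq)
next
  assume "x = y"
  then show "D x y = 0" using F_refl[of x] p by (simp add: D_F)
qed

lemma D_tri: "D x z \<le> D x y + D y z"
proof -
  define A where "A = D x y"
  define B where "B = D y z"
  have A0: "0 \<le> A" and B0: "0 \<le> B" unfolding A_def B_def by (simp_all add: D_nonneg)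
  show ?thesis
  proof (cases "A = 0 \<or> B = 0")
    case True
    then show ?thesis
    proof
      assume "A = 0" then have "x = y" using D_zero_iff A_def by simp
      then show ?thesis using D_nonneg[of y y] by simp
    next
      assume "B = 0" then have "y = z" using D_zero_iff B_def by simp
      then show ?thesis using D_nonneg[of z z] by simp
    qed
  next
    case False
    then have Ap: "0 < A" and Bp: "0 < B" using A0 B0 by auto
    define S where "S = A + B"
    have Sp: "0 < S" using Ap Bp S_def by simp
    define l where "l = A / S"
    have l: "0 < l" "l < 1" using Ap Bp unfolding l_def S_def by (auto simp: field_simps)
    have l1: "1 - l = B / S" using Sp unfolding l_def S_def by (simp add: field_simps)
    have cv: "\<And>u v. 0 \<le> u \<Longrightarrow> 0 \<le> v \<Longrightarrow> (u + v) powr p \<le> l powr (1 - p) * u powr p + (1 - l) powr (1 - p) * v powr p"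
      using conv_ineq[OF p l] by blast
    have "F x z \<le> l powr (1 - p) * F x y + (1 - l) powr (1 - p) * F y z"
      by (rule F_lin[OF cv])
    also have "\<dots> = l powr (1 - p) * A powr p + (1 - l) powr (1 - p) * B powr p"
      unfolding A_def B_def F_def ..
    also have "\<dots> = A * S powr (p - 1) + B * S powr (p - 1)"
      unfolding l1 unfolding l_def using powr_key[OF Ap Sp, of p] powr_key[OF Bp Sp, of p] by simp
    also have "\<dots> = S powr p" using powr_key2[OF Sp, of p] unfolding S_def by (simp add: distrib_right)
    finally have "F x z \<le> S powr p" .
    then have "F x z powr (1 / p) \<le> (S powr p) powr (1 / p)"
      using p by (intro powr_mono2) (auto simp: F_nonneg)
    moreover have "(S powr p) powr (1 / p) = S" using p Sp by (simp add: powr_powr)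
    moreover have "D x z = F x z powr (1 / p)" by (rule D_F)
    ultimately show ?thesis unfolding S_def A_def B_def by simp
  qed
qed

end


theorem theoremA1:
  fixes d :: "'a \<Rightarrow> 'a \<Rightarrow> real"
    and \<alpha> \<beta> :: "'a list \<Rightarrow> real"
    and p :: real
  assumes p: "1 \<le> p"
    and qm: "quasi_metric d" and sep: "separating d"
    and \<alpha>_pos: "\<And>w. w \<noteq> [] \<Longrightarrow> \<alpha> w > 0"
    and \<beta>_pos: "\<And>w. w \<noteq> [] \<Longrightarrow> \<beta> w > 0"
    and g\<alpha>: "gap_penalty (ppow \<alpha> p)"
    and g\<beta>: "gap_penalty (ppow \<beta> p)"
    and W1: "\<And>a b u v. d a b powr p + ppow \<beta> p (u @ [b] @ v) \<ge> ppow \<beta> p (u @ [a] @ v)"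
    and W2: "\<And>a b u v. d a b powr p + ppow \<alpha> p (u @ [a] @ v) \<ge> ppow \<alpha> p (u @ [b] @ v)"
    and W3: "\<And>u v x. ppow \<beta> p (u @ v) + ppow \<beta> p x \<ge> ppow \<beta> p (u @ x @ v)"
    and W4: "\<And>u v x. ppow \<alpha> p (u @ v) + ppow \<alpha> p x \<ge> ppow \<alpha> p (u @ x @ v)"
    and W5: "\<And>u v x. ppow \<beta> p (u @ x @ v) + ppow \<alpha> p x \<ge> ppow \<beta> p (u @ v)"
    and W6: "\<And>u v x. ppow \<alpha> p (u @ x @ v) + ppow \<beta> p x \<ge> ppow \<alpha> p (u @ v)"
    and W7: "\<And>u v x. ppow \<alpha> p (u @ x) + ppow \<beta> p (x @ v) \<ge> ppow \<alpha> p u + ppow \<beta> p v"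
    and W8: "\<And>u v x. ppow \<beta> p (u @ x) + ppow \<alpha> p (x @ v) \<ge> ppow \<beta> p u + ppow \<alpha> p v"
  shows "quasi_metric (edit_dist d \<alpha> \<beta> p) \<and> separating (edit_dist d \<alpha> \<beta> p)"
proof -
  interpret E: ED d \<alpha> \<beta> p
    by unfold_locales (fact p qm sep \<alpha>_pos \<beta>_pos g\<alpha> g\<beta> W1 W2 W3 W4 W5 W6 W7 W8)+
  have "quasi_metric (edit_dist d \<alpha> \<beta> p)"
    unfolding quasi_metric_def using E.D_nonneg E.D_zero_iff E.D_tri by blast
  moreover have "separating (edit_dist d \<alpha> \<beta> p)"
    unfolding separating_def using E.D_zero_iff by blast
  ultimately show ?thesis ..
qed

end
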